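(* Let $k$ be a field of characteristic $p>2$ ($p$ prime). For any $u,v,w\in k_0\langle X\rangle$, $\kappa(u,vw)\equiv 0\pmod{T(G_0)}$.
   Context: $X=\{x_i\mid i\ge0\}$ is countably infinite; $k_0\langle X\rangle$ is the free nonunitary associative $k$-algebra on $X$. $[a,b]=ab-ba$ and $\kappa(u,v)=[u,v]u^{p-1}v^{p-1}$. $G_0$ is the infinite-dimensional nonunitary Grassmann algebra over $k$ (linear basis the products $e_{i_1}\cdots e_{i_n}$, $n\ge1$, $i_1<\dots<i_n$, with $e_ie_j=-e_je_i$, $e_i^2=0$), and $T(G_0)$ is the set of $f\in k_0\langle X\rangle$ lying in the kernel of every algebra homomorphism $k_0\langle X\rangle\to G_0$. *)

theory Defs
  imports Main "HOL-Computational_Algebra.Primes"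
begin

text \<open>An element is a finitely supported k-valued function on words (lists of
  generator indices); the empty word has coefficient 0 (nonunitary).\<close>

definition FA :: "(nat list \<Rightarrow> 'k::field) set" where
  "FA = {f. finite {w. f w \<noteq> 0} \<and> f [] = 0}"

definition fa_add :: "(nat list \<Rightarrow> 'k::field) \<Rightarrow> (nat list \<Rightarrow> 'k) \<Rightarrow> (nat list \<Rightarrow> 'k)" where
  "fa_add f g = (\<lambda>w. f w + g w)"

definition fa_smult :: "'k::field \<Rightarrow> (nat list \<Rightarrow> 'k) \<Rightarrow> (nat list \<Rightarrow> 'k)" where
  "fa_smult c f = (\<lambda>w. c * f w)"

definition fa_mult :: "(nat list \<Rightarrow> 'k::field) \<Rightarrow> (nat list \<Rightarrow> 'k) \<Rightarrow> (nat list \<Rightarrow> 'k)" where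
  "fa_mult f g = (\<lambda>w. \<Sum>i\<le>length w. f (take i w) * g (drop i w))"

definition fa_comm :: "(nat list \<Rightarrow> 'k::field) \<Rightarrow> (nat list \<Rightarrow> 'k) \<Rightarrow> (nat list \<Rightarrow> 'k)" where
  "fa_comm a b = fa_add (fa_mult a b) (fa_smult (-1) (fa_mult b a))"

text \<open>Positive powers u^n, n >= 1 (fa_pow u 0 is the zero element; never used).\<close>
fun fa_pow :: "(nat list \<Rightarrow> 'k::field) \<Rightarrow> nat \<Rightarrow> (nat list \<Rightarrow> 'k)" where
  "fa_pow f 0 = (\<lambda>_. 0)"
| "fa_pow f (Suc n) = (if n = 0 then f else fa_mult (fa_pow f n) f)"

definition kappa :: "nat \<Rightarrow> (nat list \<Rightarrow> 'k::field) \<Rightarrow> (nat list \<Rightarrow> 'k) \<Rightarrow> (nat list \<Rightarrow> 'k)" where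
  "kappa p u v = fa_mult (fa_mult (fa_comm u v) (fa_pow u (p - 1))) (fa_pow v (p - 1))"

text \<open>Element: finitely supported k-valued function on index sets, supported on
  finite nonempty sets S = {i_1 < ... < i_n}, standing for e_{i_1}...e_{i_n}.\<close>

definition G0 :: "(nat set \<Rightarrow> 'k::field) set" where
  "G0 = {a. finite {S. a S \<noteq> 0} \<and> (\<forall>S. a S \<noteq> 0 \<longrightarrow> finite S \<and> S \<noteq> {})}"

text \<open>For disjoint T, U: e_T e_U = (-1)^(#{(t,u) in T x U. t > u}) e_(T Un U).\<close>
definition gsign :: "nat set \<Rightarrow> nat set \<Rightarrow> 'k::field" where
  "gsign T U = (-1) ^ card {(t, u). t \<in> T \<and> u \<in> U \<and> u < t}"

definition g_add :: "(nat set \<Rightarrow> 'k::field) \<Rightarrow> (nat set \<Rightarrow> 'k) \<Rightarrow> (nat set \<Rightarrow> 'k)" where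
  "g_add a b = (\<lambda>S. a S + b S)"

definition g_smult :: "'k::field \<Rightarrow> (nat set \<Rightarrow> 'k) \<Rightarrow> (nat set \<Rightarrow> 'k)" where
  "g_smult c a = (\<lambda>S. c * a S)"

definition g_mult :: "(nat set \<Rightarrow> 'k::field) \<Rightarrow> (nat set \<Rightarrow> 'k) \<Rightarrow> (nat set \<Rightarrow> 'k)" where
  "g_mult a b = (\<lambda>S. \<Sum>T\<in>Pow S. gsign T (S - T) * a T * b (S - T))"

definition fa_hom :: "((nat list \<Rightarrow> 'k::field) \<Rightarrow> (nat set \<Rightarrow> 'k)) \<Rightarrow> bool" where
  "fa_hom h \<longleftrightarrow>
     (\<forall>f\<in>FA. h f \<in> G0) \<and>
     (\<forall>f\<in>FA. \<forall>g\<in>FA. h (fa_add f g) = g_add (h f) (h g)) \<and>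
     (\<forall>c. \<forall>f\<in>FA. h (fa_smult c f) = g_smult c (h f)) \<and>
     (\<forall>f\<in>FA. \<forall>g\<in>FA. h (fa_mult f g) = g_mult (h f) (h g))"

definition TG0 :: "(nat list \<Rightarrow> 'k::field) set" where
  "TG0 = {f\<in>FA. \<forall>h. fa_hom h \<longrightarrow> h f = (\<lambda>_. 0)}"

end

theory Submission
  imports Defs
begin

definition ninv :: "nat set \<Rightarrow> nat set \<Rightarrow> nat" where
  "ninv T U = card {(t, u). t \<in> T \<and> u \<in> U \<and> u < t}"

lemma gsign_ninv: "gsign T U = (-1) ^ ninv T U"
  by (simp add: gsign_def ninv_def)

lemma ninv_Un_right:
  assumes "finite T" "finite U" "finite V" "U \<inter> V = {}"
  shows "ninv T (U \<union> V) = ninv T U + ninv T V"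
proof -
  have e: "{(t, u). t \<in> T \<and> u \<in> U \<union> V \<and> u < t} =
     {(t, u). t \<in> T \<and> u \<in> U \<and> u < t} \<union> {(t, u). t \<in> T \<and> u \<in> V \<and> u < t}" by auto
  have f1: "finite {(t, u). t \<in> T \<and> u \<in> U \<and> u < t}"
    by (rule finite_subset[of _ "T \<times> U"]) (use assms in auto)
  have f2: "finite {(t, u). t \<in> T \<and> u \<in> V \<and> u < t}"
    by (rule finite_subset[of _ "T \<times> V"]) (use assms in auto)
  show ?thesis unfolding ninv_def e
    by (rule card_Un_disjoint[OF f1 f2]) (use assms in auto)
qed

lemma ninv_Un_left:
  assumes "finite T" "finite U" "finite V" "T \<inter> U = {}"
  shows "ninv (T \<union> U) V = ninv T V + ninv U V"
proof -
  have e: "{(t, u). t \<in> T \<union> U \<and> u \<in> V \<and> u < t} =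
     {(t, u). t \<in> T \<and> u \<in> V \<and> u < t} \<union> {(t, u). t \<in> U \<and> u \<in> V \<and> u < t}" by auto
  have f1: "finite {(t, u). t \<in> T \<and> u \<in> V \<and> u < t}"
    by (rule finite_subset[of _ "T \<times> V"]) (use assms in auto)
  have f2: "finite {(t, u). t \<in> U \<and> u \<in> V \<and> u < t}"
    by (rule finite_subset[of _ "U \<times> V"]) (use assms in auto)
  show ?thesis unfolding ninv_def e
    by (rule card_Un_disjoint[OF f1 f2]) (use assms in auto)
qed

lemma ninv_swap:
  assumes "finite T" "finite U" "T \<inter> U = {}"
  shows "ninv T U + ninv U T = card T * card U"
proof -
  let ?A = "{(t, u). t \<in> T \<and> u \<in> U \<and> u < t}"
  let ?B = "{(t, u). t \<in> T \<and> u \<in> U \<and> t < u}"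
  have e: "T \<times> U = ?A \<union> ?B" using assms by auto
  have f1: "finite ?A" by (rule finite_subset[of _ "T \<times> U"]) (use assms in auto)
  have f2: "finite ?B" by (rule finite_subset[of _ "T \<times> U"]) (use assms in auto)
  have "card (T \<times> U) = card ?A + card ?B"
    unfolding e by (rule card_Un_disjoint[OF f1 f2]) auto
  moreover have "card ?B = ninv U T"
  proof -
    have "?B = (\<lambda>(x, y). (y, x)) ` {(t, u). t \<in> U \<and> u \<in> T \<and> u < t}" by auto
    moreover have "inj_on (\<lambda>(x, y). (y, x)) {(t, u). t \<in> U \<and> u \<in> T \<and> u < t}"
      by (auto simp: inj_on_def)
    ultimately show ?thesis unfolding ninv_def by (simp add: card_image)
  qed
  ultimately show ?thesis by (simp add: ninv_def card_cartesian_product)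
qed

lemma gsign_swap:
  assumes "finite T" "finite U" "T \<inter> U = {}"
  shows "(gsign U T :: 'k::field) = (-1) ^ (card T * card U) * gsign T U"
proof -
  have "(-1::'k) ^ (card T * card U) * gsign T U = (-1) ^ (ninv T U + ninv U T) * (-1) ^ ninv T U"
    by (simp add: ninv_swap[OF assms] gsign_ninv)
  also have "\<dots> = (-1) ^ ninv U T * ((-1) ^ ninv T U * (-1) ^ ninv T U)"
    by (simp add: power_add)
  also have "\<dots> = (-1) ^ ninv U T"
    by (simp flip: power_add add: power_mult_distrib)
  finally show ?thesis by (simp add: gsign_ninv)
qed

lemma gsign_cocycle:
  assumes "finite T" "finite U" "finite V" "T \<inter> U = {}" "T \<inter> V = {}" "U \<inter> V = {}"
  shows "(gsign T U :: 'k::field) * gsign (T \<union> U) V = gsign U V * gsign T (U \<union> V)"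
  using assms by (simp add: gsign_ninv ninv_Un_left ninv_Un_right power_add algebra_simps)

lemma g_mult_inf: "infinite S \<Longrightarrow> g_mult a b S = 0"
  by (simp add: g_mult_def)

lemma g_mult_assoc_fin:
  assumes S: "finite S"
  shows "g_mult (g_mult a b) c S = g_mult a (g_mult b c) S"
proof -
  let ?g = "gsign :: nat set \<Rightarrow> nat set \<Rightarrow> 'a"
  have "g_mult (g_mult a b) c S =
     (\<Sum>T\<in>Pow S. \<Sum>R\<in>Pow T. ?g T (S - T) * (?g R (T - R) * a R * b (T - R)) * c (S - T))"
    unfolding g_mult_def by (intro sum.cong refl) (simp add: sum_distrib_left sum_distrib_right)
  also have "\<dots> = (\<Sum>(T, R)\<in>Sigma (Pow S) Pow. ?g T (S - T) * (?g R (T - R) * a R * b (T - R)) * c (S - T))"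
    using S by (subst sum.Sigma) (auto intro: finite_subset)
  also have "\<dots> = (\<Sum>(R, Q)\<in>Sigma (Pow S) (\<lambda>R. Pow (S - R)). ?g R (S - R) * a R * (?g Q (S - R - Q) * b Q * c (S - R - Q)))"
  proof (rule sum.reindex_bij_witness[where i = "\<lambda>(R, Q). (R \<union> Q, R)" and j = "\<lambda>(T, R). (R, T - R)"])
    fix x assume "x \<in> Sigma (Pow S) Pow"
    then obtain T R where x: "x = (T, R)" "T \<subseteq> S" "R \<subseteq> T" by auto
    define Q where "Q = T - R"
    have fin: "finite R" "finite Q" "finite (S - R - Q)" using x S unfolding Q_def by (auto intro: finite_subset)
    have c: "?g R Q * ?g (R \<union> Q) (S - R - Q) = ?g Q (S - R - Q) * ?g R (Q \<union> (S - R - Q))"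
      by (rule gsign_cocycle) (use fin x in \<open>auto simp: Q_def\<close>)
    have e1: "R \<union> Q = T" "S - T = S - R - Q" "Q \<union> (S - R - Q) = S - R" "T - R = Q" using x unfolding Q_def by auto
    have c': "?g R Q * ?g T (S - R - Q) = ?g Q (S - R - Q) * ?g R (S - R)"
      using c by (simp only: e1)
    have "?g R (S - R) * a R * (?g Q (S - R - Q) * b Q * c (S - R - Q)) =
       (?g Q (S - R - Q) * ?g R (S - R)) * (a R * b Q * c (S - R - Q))" by (simp only: ac_simps)
    also have "\<dots> = (?g R Q * ?g T (S - R - Q)) * (a R * b Q * c (S - R - Q))" by (simp only: c')
    also have "\<dots> = ?g T (S - R - Q) * (?g R Q * a R * b Q) * c (S - R - Q)" by (simp only: ac_simps)
    finally show "(case (case x of (T, R) \<Rightarrow> (R, T - R)) of (R, Q) \<Rightarrow> ?g R (S - R) * a R * (?g Q (S - R - Q) * b Q * c (S - R - Q))) =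
      (case x of (T, R) \<Rightarrow> ?g T (S - T) * (?g R (T - R) * a R * b (T - R)) * c (S - T))"
      unfolding x(1) prod.case e1(2,4) .
  qed auto
  also have "\<dots> = (\<Sum>R\<in>Pow S. \<Sum>Q\<in>Pow (S - R). ?g R (S - R) * a R * (?g Q (S - R - Q) * b Q * c (S - R - Q)))"
    using S by (subst sum.Sigma) auto
  also have "\<dots> = g_mult a (g_mult b c) S"
    unfolding g_mult_def by (intro sum.cong refl) (simp add: sum_distrib_left)
  finally show ?thesis .
qed

lemma g_mult_assoc: "g_mult (g_mult a b) c = g_mult a (g_mult b c)"
proof
  fix S show "g_mult (g_mult a b) c S = g_mult a (g_mult b c) S"
    by (cases "finite S") (simp_all add: g_mult_assoc_fin g_mult_inf)
qed


lemma g_mult_distrib_left: "g_mult a (\<lambda>S. b S + c S) = (\<lambda>S. g_mult a b S + g_mult a c S)"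
  by (simp add: g_mult_def fun_eq_iff algebra_simps sum.distrib)

lemma g_mult_distrib_right: "g_mult (\<lambda>S. a S + b S) c = (\<lambda>S. g_mult a c S + g_mult b c S)"
  by (simp add: g_mult_def fun_eq_iff algebra_simps sum.distrib)

lemma g_mult_one_left:
  assumes "\<forall>S. infinite S \<longrightarrow> a S = 0"
  shows "g_mult (\<lambda>S. if S = {} then 1 else 0) a = a"
proof
  fix S show "g_mult (\<lambda>S. if S = {} then 1 else 0) a S = a S"
  proof (cases "finite S")
    case True
    have "g_mult (\<lambda>S. if S = {} then 1 else 0) a S = (\<Sum>T\<in>Pow S. if T = {} then gsign T (S - T) * a (S - T) else 0)"
      unfolding g_mult_def by (intro sum.cong) auto
    also have "\<dots> = gsign {} S * a S" using True by simp
    finally show ?thesis by (simp add: gsign_def)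
  qed (simp add: g_mult_inf assms)
qed

lemma g_mult_one_right:
  assumes "\<forall>S. infinite S \<longrightarrow> a S = 0"
  shows "g_mult a (\<lambda>S. if S = {} then 1 else 0) = a"
proof
  fix S show "g_mult a (\<lambda>S. if S = {} then 1 else 0) S = a S"
  proof (cases "finite S")
    case True
    have "g_mult a (\<lambda>S. if S = {} then 1 else 0) S = (\<Sum>T\<in>Pow S. if T = S then gsign T (S - T) * a T else 0)"
      unfolding g_mult_def by (intro sum.cong) auto
    also have "\<dots> = gsign S {} * a S" using True by simp
    finally show ?thesis by (simp add: gsign_def)
  qed (simp add: g_mult_inf assms)
qed

typedef (overloaded) 'k gr = "{a :: nat set \<Rightarrow> 'k::field. \<forall>S. infinite S \<longrightarrow> a S = 0}"
  morphisms rep Abs_gr by (rule exI[of _ "\<lambda>_. 0"]) simp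

setup_lifting type_definition_gr

instantiation gr :: (field) ring_1
begin
lift_definition zero_gr :: "'a gr" is "\<lambda>_. 0" by simp
lift_definition one_gr :: "'a gr" is "\<lambda>S. if S = {} then 1 else 0" by auto
lift_definition plus_gr :: "'a gr \<Rightarrow> 'a gr \<Rightarrow> 'a gr" is "\<lambda>a b S. a S + b S" by simp
lift_definition minus_gr :: "'a gr \<Rightarrow> 'a gr \<Rightarrow> 'a gr" is "\<lambda>a b S. a S - b S" by simp
lift_definition uminus_gr :: "'a gr \<Rightarrow> 'a gr" is "\<lambda>a S. - a S" by simp
lift_definition times_gr :: "'a gr \<Rightarrow> 'a gr \<Rightarrow> 'a gr" is "g_mult" by (simp add: g_mult_inf)
instance
proof
  fix a b c :: "'a gr"
  show "a * b * c = a * (b * c)" by transfer (rule g_mult_assoc)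
  show "(a + b) * c = a * c + b * c" by transfer (rule g_mult_distrib_right)
  show "a * (b + c) = a * b + a * c" by transfer (rule g_mult_distrib_left)
  show "1 * a = a" by transfer (rule g_mult_one_left)
  show "a * 1 = a" by transfer (rule g_mult_one_right)
  show "a + b + c = a + (b + c)" by transfer (simp add: add.assoc)
  show "a + b = b + a" by transfer (simp add: add.commute)
  show "0 + a = a" by transfer simp
  show "- a + a = 0" by transfer simp
  show "a - b = a + - b" by transfer simp
  show "(0::'a gr) \<noteq> 1" by transfer (simp add: fun_eq_iff)
qed
end

lemma rep_times: "rep (x * y) = g_mult (rep x) (rep y)" by transfer simp
lemma rep_plus: "rep (x + y) = (\<lambda>S. rep x S + rep y S)" by transfer simp
lemma rep_minus: "rep (x - y) = (\<lambda>S. rep x S - rep y S)" by transfer simp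
lemma rep_uminus: "rep (- x) = (\<lambda>S. - rep x S)" by transfer simp
lemma rep_zero: "rep 0 = (\<lambda>_. 0)" by transfer simp
lemma rep_one: "rep 1 = (\<lambda>S. if S = {} then 1 else 0)" by transfer simp
lemma rep_inf: "infinite S \<Longrightarrow> rep x S = 0" using rep[of x] by auto
lemma rep_of_nat: "rep (of_nat n) = (\<lambda>S. if S = {} then of_nat n else 0)"
  by (induction n) (auto simp: rep_plus rep_one rep_zero)
lemma gr_eqI: "(\<And>S. rep x S = rep y S) \<Longrightarrow> x = y"
  by (simp add: rep_inject[symmetric] fun_eq_iff)


lemma card_split: "finite S \<Longrightarrow> T \<subseteq> S \<Longrightarrow> card T + card (S - T) = card S"
  by (metis card_Diff_subset card_mono finite_subset le_add_diff_inverse)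

lemma g_mult_swap:
  assumes S: "finite S"
  shows "(g_mult b a S :: 'k::field) =
    (\<Sum>T\<in>Pow S. (-1) ^ (card T * card (S - T)) * gsign T (S - T) * a T * b (S - T))"
proof -
  have "g_mult b a S = (\<Sum>T\<in>Pow S. gsign (S - T) T * b (S - T) * a T)"
    unfolding g_mult_def
    by (rule sum.reindex_bij_witness[where i = "\<lambda>T. S - T" and j = "\<lambda>T. S - T"])
       (auto simp: Diff_Diff_Int Int_absorb1)
  also have "\<dots> = (\<Sum>T\<in>Pow S. (-1) ^ (card T * card (S - T)) * gsign T (S - T) * a T * b (S - T))"
  proof (intro sum.cong refl)
    fix T assume "T \<in> Pow S"
    then have "finite T" "finite (S - T)" "T \<inter> (S - T) = {}" using S by (auto intro: finite_subset)
    note eq = gsign_swap[OF this, where 'k='k]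
    show "gsign (S - T) T * b (S - T) * a T =
       (-1) ^ (card T * card (S - T)) * gsign T (S - T) * a T * (b (S - T) :: 'k)"
      unfolding eq by (simp only: mult.assoc mult.commute mult.left_commute)
  qed
  finally show ?thesis .
qed

definition evn :: "'k::field gr \<Rightarrow> bool" where
  "evn x \<longleftrightarrow> (\<forall>S. odd (card S) \<longrightarrow> rep x S = 0)"
definition oddg :: "'k::field gr \<Rightarrow> bool" where
  "oddg x \<longleftrightarrow> (\<forall>S. even (card S) \<longrightarrow> rep x S = 0)"

lemma evn_comm:
  assumes "evn x" shows "x * y = y * x"
proof (rule gr_eqI)
  fix S show "rep (x * y) S = rep (y * x) S"
  proof (cases "finite S")
    case True
    show ?thesis unfolding rep_times g_mult_swap[OF True, of "rep y" "rep x"]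
      unfolding g_mult_def
    proof (intro sum.cong refl)
      fix T assume "T \<in> Pow S"
      show "gsign T (S - T) * rep x T * rep y (S - T) =
        (-1) ^ (card T * card (S - T)) * gsign T (S - T) * rep x T * rep y (S - T)"
      proof (cases "rep x T = 0")
        case False
        then have "even (card T)" using assms unfolding evn_def by blast
        then have "(-1::'a) ^ (card T * card (S - T)) = 1" by (simp add: neg_one_even_power)
        then show ?thesis by simp
      qed simp
    qed
  qed (simp add: rep_inf)
qed

lemma odd_anti:
  assumes "oddg x" "oddg y" shows "y * x = - (x * y)"
proof (rule gr_eqI)
  fix S show "rep (y * x) S = rep (- (x * y)) S"
  proof (cases "finite S")
    case True
    show ?thesis unfolding rep_times rep_uminus g_mult_swap[OF True, of "rep y" "rep x"]
      unfolding g_mult_def sum_negf[symmetric]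
    proof (intro sum.cong refl)
      fix T assume "T \<in> Pow S"
      show "(-1) ^ (card T * card (S - T)) * gsign T (S - T) * rep x T * rep y (S - T) =
        - (gsign T (S - T) * rep x T * rep y (S - T))"
      proof (cases "rep x T = 0 \<or> rep y (S - T) = 0")
        case False
        then have "odd (card T)" "odd (card (S - T))" using assms unfolding oddg_def by blast+
        then have "(-1::'a) ^ (card T * card (S - T)) = -1" by (simp add: neg_one_odd_power)
        then show ?thesis by simp
      qed auto
    qed
  qed (simp add: rep_inf)
qed

lemma odd_sq:
  assumes "oddg x" "(2::'k::field) \<noteq> 0" shows "x * x = (0::'k gr)"
proof (rule gr_eqI)
  fix S
  have e: "x * x = - (x * x)" by (rule odd_anti[OF assms(1) assms(1)])
  have e1: "rep (x * x) S = rep (- (x * x)) S" by (simp only: e[symmetric])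
  have e2: "rep (- (x * x)) S = - rep (x * x) S" by (simp only: rep_uminus)
  have h: "rep (x * x) S = - rep (x * x) S" by (rule trans[OF e1 e2])
  have h2: "rep (x * x) S + rep (x * x) S = 0" by (subst (2) h) (rule add.right_inverse)
  have "2 * rep (x * x) S = 0" by (rule trans[OF mult_2 h2])
  then show "rep (x * x) S = rep 0 S" using assms(2) by (simp add: rep_zero)
qed

lemma rep_times_zero:
  assumes "\<And>T. T \<subseteq> S \<Longrightarrow> rep x T = 0 \<or> rep y (S - T) = 0"
  shows "rep (x * y) S = 0"
  unfolding rep_times g_mult_def using assms by (intro sum.neutral) auto

lemma parity_mult:
  assumes "\<And>S. Px (card S) \<Longrightarrow> rep x S = 0" "\<And>S. Py (card S) \<Longrightarrow> rep y S = 0"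
    and "\<And>m n. Q (m + n) \<Longrightarrow> Px m \<or> Py n"
    and "Q (card S)"
  shows "rep (x * y) S = 0"
proof (cases "finite S")
  case True
  show ?thesis
  proof (rule rep_times_zero)
    fix T assume "T \<subseteq> S"
    then have "Q (card T + card (S - T))" using card_split[OF True] assms(4) by simp
    then show "rep x T = 0 \<or> rep y (S - T) = 0" using assms by blast
  qed
qed (simp add: rep_inf)

lemma evn_mult: "evn x \<Longrightarrow> evn y \<Longrightarrow> evn (x * y)"
  unfolding evn_def by (intro allI impI, rule parity_mult[where Px=odd and Py=odd and Q=odd]) auto
lemma oddg_mult_eo: "evn x \<Longrightarrow> oddg y \<Longrightarrow> oddg (x * y)"
  unfolding evn_def oddg_def by (intro allI impI, rule parity_mult[where Px=odd and Py=even and Q=even]) auto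
lemma oddg_mult_oe: "oddg x \<Longrightarrow> evn y \<Longrightarrow> oddg (x * y)"
  unfolding evn_def oddg_def by (intro allI impI, rule parity_mult[where Px=even and Py=odd and Q=even]) auto
lemma evn_mult_oo: "oddg x \<Longrightarrow> oddg y \<Longrightarrow> evn (x * y)"
  unfolding evn_def oddg_def by (intro allI impI, rule parity_mult[where Px=even and Py=even and Q=odd]) auto
lemma evn_add: "evn x \<Longrightarrow> evn y \<Longrightarrow> evn (x + y)"
  unfolding evn_def by (simp add: rep_plus)
lemma oddg_add: "oddg x \<Longrightarrow> oddg y \<Longrightarrow> oddg (x + y)"
  unfolding oddg_def by (simp add: rep_plus)
lemma evn_one: "evn 1"
  unfolding evn_def by (simp add: rep_one)
lemma evn_power: "evn x \<Longrightarrow> evn (x ^ n)"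
  by (induction n) (simp_all add: evn_one evn_mult)

lift_definition restr :: "(nat set \<Rightarrow> bool) \<Rightarrow> 'k::field gr \<Rightarrow> 'k gr" is
  "\<lambda>P a S. if P S then a S else 0" by simp

lemma rep_restr: "rep (restr P x) = (\<lambda>S. if P S then rep x S else 0)"
  by transfer simp

lemma restr_split: "x = restr P x + restr (\<lambda>S. \<not> P S) x"
  by (rule gr_eqI) (simp add: rep_plus rep_restr)

lemma evn_restr: "evn (restr (\<lambda>S. even (card S)) x)"
  unfolding evn_def by (simp add: rep_restr)
lemma oddg_restr: "oddg (restr (\<lambda>S. \<not> even (card S)) x)"
  unfolding oddg_def by (simp add: rep_restr)


lemma comm_power: "(y::'a::ring_1) * z = z * y \<Longrightarrow> y ^ n * z = z * y ^ n"
proof (induction n)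
  case (Suc n)
  have "y ^ Suc n * z = y * (y ^ n * z)" by (simp add: mult.assoc)
  also have "\<dots> = y * (z * y ^ n)" using Suc by simp
  also have "\<dots> = z * y ^ Suc n" using Suc.prems by (simp flip: mult.assoc)
  finally show ?case .
qed simp

lemma binom_nil:
  fixes y z :: "'a::ring_1"
  assumes yz: "y * z = z * y" and zz: "z * z = 0"
  shows "(y + z) ^ Suc n = y ^ Suc n + of_nat (Suc n) * (y ^ n * z)"
proof (induction n)
  case 0 then show ?case by simp
next
  case (Suc n)
  have a: "y ^ n * z * y = y ^ Suc n * z"
    by (metis mult.assoc yz power_Suc2)
  have b: "y ^ n * z * z = 0" by (simp add: mult.assoc zz)
  have "(y + z) ^ Suc (Suc n) = (y ^ Suc n + of_nat (Suc n) * (y ^ n * z)) * (y + z)"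
    by (simp only: power_Suc2[of _ "Suc n"] Suc)
  also have "\<dots> = y ^ Suc n * y + y ^ Suc n * z + of_nat (Suc n) * (y ^ n * z * y) + of_nat (Suc n) * (y ^ n * z * z)"
    by (simp add: algebra_simps)
  also have "\<dots> = y ^ Suc (Suc n) + of_nat (Suc (Suc n)) * (y ^ Suc n * z)"
    unfolding a b by (simp add: algebra_simps power_commutes)
  finally show ?case .
qed

lemma comm_mult_power:
  fixes y w :: "'a::ring_1"
  assumes "y * w = w * y"
  shows "(y * w) ^ n = y ^ n * w ^ n"
proof (induction n)
  case (Suc n)
  have "(y * w) ^ Suc n = y * (w * y ^ n) * w ^ n" by (simp add: Suc mult.assoc)
  also have "\<dots> = y ^ Suc n * w ^ Suc n"
    using comm_power[OF assms, of n] by (metis mult.assoc power_Suc)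
  finally show ?case .
qed simp

lemma single_sq:
  assumes "\<And>S. S \<noteq> S0 \<Longrightarrow> rep y S = 0" "S0 \<noteq> {}"
  shows "y * y = 0"
proof (rule gr_eqI)
  fix S show "rep (y * y) S = rep 0 S"
    unfolding rep_zero
  proof (rule rep_times_zero)
    fix T assume "T \<subseteq> S"
    show "rep y T = 0 \<or> rep y (S - T) = 0"
      using assms by (metis Diff_disjoint Int_absorb)
  qed
qed

lemma of_nat_gr_zero: "of_nat p = (0::'k::field) \<Longrightarrow> (of_nat p :: 'k gr) = 0"
  by (rule gr_eqI) (simp add: rep_of_nat rep_zero)

lemma nilp:
  fixes p :: nat
  assumes p: "of_nat p = (0::'k::field)" "p > 0" and F: "finite F"
  shows "(\<forall>S\<in>F. S \<noteq> {} \<and> even (card S)) \<Longrightarrow> (\<And>S. S \<notin> F \<Longrightarrow> rep x S = 0) \<Longrightarrow> (x :: 'k gr) ^ p = 0"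
  using F
proof (induction F arbitrary: x rule: finite_induct)
  case empty
  then have "x = 0" by (intro gr_eqI) (simp add: rep_zero)
  then show ?case using p by (simp add: power_0_left)
next
  case (insert S0 F)
  define z where "z = restr (\<lambda>S. S \<noteq> S0) x"
  define y where "y = restr (\<lambda>S. \<not> S \<noteq> S0) x"
  have x: "x = z + y" unfolding z_def y_def by (rule restr_split)
  have z: "z ^ p = 0"
    by (rule insert.IH) (use insert.prems in \<open>auto simp: z_def rep_restr\<close>)
  have ey: "evn y" using insert.prems unfolding evn_def y_def by (auto simp: rep_restr)
  have yy: "y * y = 0"
    by (rule single_sq[of S0]) (use insert.prems in \<open>auto simp: y_def rep_restr\<close>)
  obtain m where m: "p = Suc m" using p(2) by (cases p) auto
  have "x ^ p = z ^ p + of_nat p * (z ^ m * y)"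
    unfolding x m by (rule binom_nil) (simp_all only: evn_comm[OF ey, of z, symmetric] yy)
  then show ?case using z of_nat_gr_zero[OF p(1)] by simp
qed


lemma mult_of_nat_mid: "(u::'a::ring_1) * (of_nat n * v) = of_nat n * (u * v)"
  by (metis mult.assoc mult_of_nat_commute)

lemma key:
  fixes a0 a1 b0 b1 c0 c1 :: "'k::field gr" and r :: nat
  assumes ea: "evn a0" and oa: "oddg a1" and eb: "evn b0" and ob: "oddg b1"
    and ec: "evn c0" and oc: "oddg c1" and two: "(2::'k) \<noteq> 0"
    and b0p: "b0 ^ Suc (Suc r) = 0" and c0p: "c0 ^ Suc (Suc r) = 0"
  shows "((a0 + a1) * ((b0 + b1) * (c0 + c1)) - ((b0 + b1) * (c0 + c1)) * (a0 + a1))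
          * (a0 + a1) ^ Suc r * ((b0 + b1) * (c0 + c1)) ^ Suc r = 0"
proof -
  define q where "q = Suc r"
  define x0 where "x0 = b0 * c0 + b1 * c1"
  define x1 where "x1 = b0 * c1 + b1 * c0"
  define A where "A = a0 + a1"
  define X where "X = (b0 + b1) * (c0 + c1)"
  have X: "X = x0 + x1" unfolding X_def x0_def x1_def by (simp add: algebra_simps)
  have ex0: "evn x0" unfolding x0_def by (intro evn_add evn_mult evn_mult_oo ea eb ec ob oc)
  have ox1: "oddg x1" unfolding x1_def by (intro oddg_add oddg_mult_eo oddg_mult_oe eb ec ob oc)
  have c1c1: "c1 * c1 = 0" by (rule odd_sq[OF oc two])
  have b1b1: "b1 * b1 = 0" by (rule odd_sq[OF ob two])
  have a1a1: "a1 * a1 = 0" by (rule odd_sq[OF oa two])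
  have x1x1: "x1 * x1 = 0" by (rule odd_sq[OF ox1 two])
  define y where "y = b0 * c0"
  define z where "z = b1 * c1"
  have ey: "evn y" unfolding y_def by (rule evn_mult[OF eb ec])
  have ez: "evn z" unfolding z_def by (rule evn_mult_oo[OF ob oc])
  have zz: "z * z = 0"
  proof -
    have "z * z = b1 * (c1 * b1) * c1" unfolding z_def by (simp add: mult.assoc)
    also have "\<dots> = - (b1 * b1 * (c1 * c1))" by (simp add: odd_anti[OF ob oc] mult.assoc)
    finally show ?thesis by (simp add: b1b1)
  qed
  have zx1: "z * x1 = 0"
  proof -
    have "z * (b0 * c1) = b1 * (c1 * b0) * c1" unfolding z_def by (simp add: mult.assoc)
    also have "\<dots> = b1 * b0 * (c1 * c1)" by (simp add: evn_comm[OF eb, of c1, symmetric] mult.assoc)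
    finally have 1: "z * (b0 * c1) = 0" by (simp add: c1c1)
    have "z * (b1 * c0) = b1 * (c1 * b1) * c0" unfolding z_def by (simp add: mult.assoc)
    also have "\<dots> = - (b1 * b1 * (c1 * c0))" by (simp add: odd_anti[OF ob oc] mult.assoc)
    finally have 2: "z * (b1 * c0) = 0" by (simp add: b1b1)
    show ?thesis unfolding x1_def by (simp add: distrib_left 1 2)
  qed
  have x0y: "x0 = y + z" unfolding x0_def y_def z_def ..
  have "x0 ^ Suc r * x1 = (y ^ Suc r + of_nat (Suc r) * (y ^ r * z)) * x1"
    unfolding x0y by (rule arg_cong[where f = "\<lambda>t. t * x1"], rule binom_nil)
      (simp_all add: evn_comm[OF ey] zz)
  also have "\<dots> = y ^ Suc r * x1"
    by (simp add: distrib_right mult.assoc zx1)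
  also have "y ^ Suc r = b0 ^ Suc r * c0 ^ Suc r"
    unfolding y_def by (rule comm_mult_power) (rule evn_comm[OF eb])
  also have "b0 ^ Suc r * c0 ^ Suc r * x1 = 0"
  proof -
    have 1: "b0 ^ Suc r * c0 ^ Suc r * (b0 * c1) = b0 ^ Suc r * (b0 * c0 ^ Suc r) * c1"
      by (metis mult.assoc evn_comm[OF eb, of "c0 ^ Suc r"])
    have 2: "b0 ^ Suc r * c0 ^ Suc r * (b1 * c0) = b0 ^ Suc r * (b1 * c0 ^ Suc r) * c0"
      by (metis mult.assoc evn_comm[OF evn_power[OF ec, of "Suc r"], of b1])
    have 3: "b0 ^ Suc r * (b0 * c0 ^ Suc r) * c1 = 0"
      using b0p by (simp add: mult.assoc[symmetric] power_Suc2[symmetric] del: power_Suc)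
    have 4: "b0 ^ Suc r * (b1 * c0 ^ Suc r) * c0 = 0"
      using c0p by (simp add: mult.assoc power_Suc2[symmetric] del: power_Suc)
    show ?thesis unfolding x1_def distrib_left 1 2 3 4 by simp
  qed
  finally have step1: "x0 ^ Suc r * x1 = 0" .
  have x1x0: "x1 * x0 ^ n = x0 ^ n * x1" for n by (rule evn_comm[OF evn_power[OF ex0], symmetric])
  define w where "w = a1 * x1"
  have comm: "A * (x0 + x1) - (x0 + x1) * A = w + w"
  proof -
    have h1: "(x0 + x1) * a0 = a0 * (x0 + x1)" by (rule evn_comm[OF ea, symmetric])
    have h2: "x0 * a1 = a1 * x0" by (rule evn_comm[OF ex0])
    have h3: "x1 * a1 = - (a1 * x1)" by (rule odd_anti[OF oa ox1])
    have "A * (x0 + x1) - (x0 + x1) * A =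
      (a0 * (x0 + x1) - (x0 + x1) * a0) + (a1 * x0 - x0 * a1) + (a1 * x1 - x1 * a1)"
      unfolding A_def by (simp add: algebra_simps)
    also have "\<dots> = w + w" unfolding h1 h2 h3 w_def by simp
    finally show ?thesis .
  qed
  have Apow: "A ^ Suc r = a0 ^ Suc r + of_nat (Suc r) * (a0 ^ r * a1)"
    unfolding A_def by (rule binom_nil) (simp_all only: evn_comm[OF ea, of a1] a1a1)
  have Xpow: "(x0 + x1) ^ Suc r = x0 ^ Suc r + of_nat (Suc r) * (x0 ^ r * x1)"
    by (rule binom_nil) (simp_all only: evn_comm[OF ex0, of x1] x1x1)
  have wa0: "w * a0 ^ n = a0 ^ n * w" for n by (rule evn_comm[OF evn_power[OF ea], symmetric])
  have t1: "w * a1 = 0"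
  proof -
    have "w * a1 = a1 * (x1 * a1)" unfolding w_def by (simp add: mult.assoc)
    also have "\<dots> = - (a1 * a1 * x1)" by (simp add: odd_anti[OF oa ox1] mult.assoc)
    finally show ?thesis by (simp add: a1a1)
  qed
  have t2: "w * (a0 ^ r * a1) = 0"
    by (metis mult.assoc wa0 t1 mult_zero_right)
  have wA: "w * A ^ Suc r = w * a0 ^ Suc r"
    unfolding Apow distrib_left mult_of_nat_mid t2 by simp
  have t3: "w * x0 ^ Suc r = 0"
  proof -
    have "w * x0 ^ Suc r = a1 * (x1 * x0 ^ Suc r)" unfolding w_def by (simp add: mult.assoc del: power_Suc)
    also have "\<dots> = a1 * (x0 ^ Suc r * x1)" by (simp only: x1x0)
    finally show ?thesis by (simp only: step1 mult_zero_right)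
  qed
  have t4: "w * (x0 ^ r * x1) = 0"
  proof -
    have "w * (x0 ^ r * x1) = a1 * ((x1 * x0 ^ r) * x1)" unfolding w_def by (simp add: mult.assoc)
    also have "\<dots> = a1 * (x0 ^ r * (x1 * x1))" by (simp only: x1x0 mult.assoc)
    finally show ?thesis by (simp add: x1x1)
  qed
  have main: "w * A ^ Suc r * (x0 + x1) ^ Suc r = 0"
  proof -
    have "w * A ^ Suc r * (x0 + x1) ^ Suc r = a0 ^ Suc r * (w * (x0 + x1) ^ Suc r)"
      unfolding wA wa0 by (simp add: mult.assoc del: power_Suc)
    also have "w * (x0 + x1) ^ Suc r = 0"
      unfolding Xpow distrib_left mult_of_nat_mid t3 t4 by simp
    finally show ?thesis by simp
  qed
  have "(A * (x0 + x1) - (x0 + x1) * A) * A ^ Suc r * (x0 + x1) ^ Suc r = 0"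
    by (subst comm) (simp only: distrib_right main add_0_left)
  then show ?thesis unfolding A_def X[unfolded X_def] .
qed


lemma FA_add: "f \<in> FA \<Longrightarrow> g \<in> FA \<Longrightarrow> fa_add f g \<in> FA"
  unfolding FA_def fa_add_def
  by (auto intro: finite_subset[of _ "{w. f w \<noteq> 0} \<union> {w. g w \<noteq> 0}"])

lemma FA_smult: "f \<in> FA \<Longrightarrow> fa_smult c f \<in> FA"
  unfolding FA_def fa_smult_def
  by (auto intro: finite_subset[of _ "{w. f w \<noteq> 0}"])

lemma FA_mult:
  assumes "f \<in> FA" "g \<in> FA" shows "fa_mult f g \<in> FA"
proof -
  have "{w. fa_mult f g w \<noteq> 0} \<subseteq> (\<lambda>(a, b). a @ b) ` ({w. f w \<noteq> 0} \<times> {w. g w \<noteq> 0})"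
  proof
    fix w assume "w \<in> {w. fa_mult f g w \<noteq> 0}"
    then have "(\<Sum>i\<le>length w. f (take i w) * g (drop i w)) \<noteq> 0" by (simp add: fa_mult_def)
    then obtain i where "f (take i w) * g (drop i w) \<noteq> 0"
      using sum.not_neutral_contains_not_neutral by blast
    then show "w \<in> (\<lambda>(a, b). a @ b) ` ({w. f w \<noteq> 0} \<times> {w. g w \<noteq> 0})"
      by (intro image_eqI[of _ _ "(take i w, drop i w)"]) auto
  qed
  moreover have "finite ((\<lambda>(a, b). a @ b) ` ({w. f w \<noteq> 0} \<times> {w. g w \<noteq> 0}))"
    using assms by (simp add: FA_def)
  ultimately have "finite {w. fa_mult f g w \<noteq> 0}" by (rule finite_subset)
  moreover have "fa_mult f g [] = 0" using assms by (simp add: FA_def fa_mult_def)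
  ultimately show ?thesis by (simp add: FA_def)
qed

lemma FA_pow: "f \<in> FA \<Longrightarrow> fa_pow f n \<in> FA"
proof (induction n)
  case 0 show ?case by (simp add: FA_def)
next
  case (Suc n)
  have "fa_pow f n \<in> FA" using Suc.IH Suc.prems .
  then show ?case using Suc.prems FA_mult[of "fa_pow f n" f] by (cases "n = 0") auto
qed

lemma FA_comm: "f \<in> FA \<Longrightarrow> g \<in> FA \<Longrightarrow> fa_comm f g \<in> FA"
  unfolding fa_comm_def by (intro FA_add FA_smult FA_mult)

lemma FA_kappa: "u \<in> FA \<Longrightarrow> v \<in> FA \<Longrightarrow> kappa p u v \<in> FA"
  unfolding kappa_def by (intro FA_mult FA_comm FA_pow)

lemma G0_carrier: "a \<in> G0 \<Longrightarrow> \<forall>S. infinite S \<longrightarrow> a S = 0"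
  unfolding G0_def by auto

context
  fixes h :: "(nat list \<Rightarrow> 'k::field) \<Rightarrow> (nat set \<Rightarrow> 'k)"
  assumes h: "fa_hom h"
begin

definition phi :: "(nat list \<Rightarrow> 'k) \<Rightarrow> 'k gr" where "phi f = Abs_gr (h f)"

lemma rep_phi: "f \<in> FA \<Longrightarrow> rep (phi f) = h f"
  unfolding phi_def using h G0_carrier unfolding fa_hom_def
  by (intro Abs_gr_inverse) auto

lemma phi_mult: "f \<in> FA \<Longrightarrow> g \<in> FA \<Longrightarrow> phi (fa_mult f g) = phi f * phi g"
  by (rule gr_eqI) (use h in \<open>simp add: rep_phi FA_mult rep_times fa_hom_def\<close>)

lemma phi_add: "f \<in> FA \<Longrightarrow> g \<in> FA \<Longrightarrow> phi (fa_add f g) = phi f + phi g"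
  by (rule gr_eqI) (use h in \<open>simp add: rep_phi FA_add rep_plus fa_hom_def g_add_def\<close>)

lemma phi_neg: "f \<in> FA \<Longrightarrow> phi (fa_smult (-1) f) = - phi f"
  by (rule gr_eqI) (use h in \<open>simp add: rep_phi FA_smult rep_uminus fa_hom_def g_smult_def\<close>)

lemma phi_comm: "f \<in> FA \<Longrightarrow> g \<in> FA \<Longrightarrow> phi (fa_comm f g) = phi f * phi g - phi g * phi f"
  unfolding fa_comm_def by (simp add: phi_add phi_neg phi_mult FA_mult FA_smult)

lemma phi_pow: "f \<in> FA \<Longrightarrow> phi (fa_pow f (Suc n)) = phi f ^ Suc n"
proof (induction n)
  case (Suc n)
  have "phi (fa_pow f (Suc (Suc n))) = phi (fa_mult (fa_pow f (Suc n)) f)" by simp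
  also have "\<dots> = phi (fa_pow f (Suc n)) * phi f"
    by (rule phi_mult[OF FA_pow[OF Suc.prems] Suc.prems])
  also have "\<dots> = phi f ^ Suc n * phi f" by (simp only: Suc.IH[OF Suc.prems])
  also have "\<dots> = phi f ^ Suc (Suc n)" by (rule power_Suc2[symmetric])
  finally show ?case .
qed simp

end

theorem corollary2p3:
  fixes p :: nat and u v w :: "nat list \<Rightarrow> 'k::field"
  assumes "prime p" and "p > 2" and "CHAR('k) = p"
    and "u \<in> FA" and "v \<in> FA" and "w \<in> FA"
  shows "kappa p u (fa_mult v w) \<in> TG0"
proof -
  have vw: "fa_mult v w \<in> FA" using assms by (simp add: FA_mult)
  have kFA: "kappa p u (fa_mult v w) \<in> FA" using assms vw by (simp add: FA_kappa)
  define r where "r = p - 2"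
  have r: "p = Suc (Suc r)" using assms(2) unfolding r_def by simp
  have pk: "of_nat p = (0::'k)" using assms(3) of_nat_CHAR[where 'a='k] by simp
  have two: "(2::'k) \<noteq> 0"
  proof
    assume "(2::'k) = 0"
    then have "of_nat 2 = (0::'k)" by simp
    then have "p dvd 2" using assms(3) by (simp only: of_nat_eq_0_iff_char_dvd)
    then show False using assms(2) by (simp add: nat_dvd_not_less)
  qed
  have "\<forall>h. fa_hom h \<longrightarrow> h (kappa p u (fa_mult v w)) = (\<lambda>_. 0)"
  proof (intro allI impI)
    fix h :: "(nat list \<Rightarrow> 'k) \<Rightarrow> (nat set \<Rightarrow> 'k)"
    assume h: "fa_hom h"
    let ?phi = "phi h"
    have G: "h f \<in> G0" if "f \<in> FA" for f using h that unfolding fa_hom_def by blast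
    define a where "a = ?phi u"
    define b where "b = ?phi v"
    define c where "c = ?phi w"
    have "?phi (kappa p u (fa_mult v w)) =
       (a * (b * c) - (b * c) * a) * a ^ Suc r * (b * c) ^ Suc r"
    proof -
      have F1: "fa_comm u (fa_mult v w) \<in> FA" using assms vw by (simp add: FA_comm)
      have F2: "fa_pow u (Suc r) \<in> FA" using assms by (simp add: FA_pow del: fa_pow.simps)
      have F4: "fa_pow (fa_mult v w) (Suc r) \<in> FA" using vw by (simp add: FA_pow del: fa_pow.simps)
      have F3: "fa_mult (fa_comm u (fa_mult v w)) (fa_pow u (Suc r)) \<in> FA" using F1 F2 by (rule FA_mult)
      have pm: "p - 1 = Suc r" using r by simp
      have "?phi (kappa p u (fa_mult v w)) = ?phi (fa_mult (fa_mult (fa_comm u (fa_mult v w)) (fa_pow u (Suc r))) (fa_pow (fa_mult v w) (Suc r)))"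
        unfolding kappa_def pm ..
      also have "\<dots> = ?phi (fa_comm u (fa_mult v w)) * ?phi (fa_pow u (Suc r)) * ?phi (fa_pow (fa_mult v w) (Suc r))"
        by (simp only: phi_mult[OF h F3 F4] phi_mult[OF h F1 F2])
      also have "\<dots> = (a * (b * c) - (b * c) * a) * a ^ Suc r * (b * c) ^ Suc r"
        unfolding a_def b_def c_def
        by (simp only: phi_comm[OF h assms(4) vw] phi_pow[OF h assms(4)] phi_pow[OF h vw] phi_mult[OF h assms(5) assms(6)])
      finally show ?thesis .
    qed
    also have "\<dots> = 0"
    proof -
      define E :: "nat set \<Rightarrow> bool" where "E = (\<lambda>S. even (card S))"
      have sp: "x = restr E x + restr (\<lambda>S. \<not> E S) x" for x :: "'k gr" by (rule restr_split)
      have nil: "restr E (?phi f) ^ Suc (Suc r) = 0" if f: "f \<in> FA" for f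
      proof -
        let ?F = "{S. rep (restr E (?phi f)) S \<noteq> 0}"
        have sub: "?F \<subseteq> {S. h f S \<noteq> 0}" using f by (auto simp: rep_restr rep_phi[OF h])
        have fin: "finite ?F"
          by (rule finite_subset[OF sub]) (use G[OF f] in \<open>simp add: G0_def\<close>)
        have pk2: "of_nat (Suc (Suc r)) = (0::'k)" using pk r by simp
        have bal: "\<forall>S\<in>?F. S \<noteq> {} \<and> even (card S)"
        proof
          fix S assume "S \<in> ?F"
          then have "E S" "h f S \<noteq> 0" by (simp_all add: rep_restr rep_phi[OF h f] split: if_splits)
          then show "S \<noteq> {} \<and> even (card S)" using G[OF f] unfolding G0_def E_def by blast
        qed
        have out: "rep (restr E (?phi f)) S = 0" if "S \<notin> ?F" for S using that by simp
        show ?thesis by (rule nilp[OF pk2 _ fin bal out]) simp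
      qed
      show ?thesis
      proof -
        define a0 where "a0 = restr E a"
        define a1 where "a1 = restr (\<lambda>S. \<not> E S) a"
        define b0 where "b0 = restr E b"
        define b1 where "b1 = restr (\<lambda>S. \<not> E S) b"
        define c0 where "c0 = restr E c"
        define c1 where "c1 = restr (\<lambda>S. \<not> E S) c"
        have ha: "a = a0 + a1" unfolding a0_def a1_def by (rule sp)
        have hb: "b = b0 + b1" unfolding b0_def b1_def by (rule sp)
        have hc: "c = c0 + c1" unfolding c0_def c1_def by (rule sp)
        show ?thesis unfolding ha hb hc
        proof (rule key)
          show "evn a0" unfolding a0_def E_def by (rule evn_restr)
          show "evn b0" unfolding b0_def E_def by (rule evn_restr)
          show "evn c0" unfolding c0_def E_def by (rule evn_restr)
          show "oddg a1" unfolding a1_def E_def by (rule oddg_restr)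
          show "oddg b1" unfolding b1_def E_def by (rule oddg_restr)
          show "oddg c1" unfolding c1_def E_def by (rule oddg_restr)
          show "(2::'k) \<noteq> 0" by (rule two)
          show "b0 ^ Suc (Suc r) = 0" unfolding b0_def b_def by (rule nil[OF assms(5)])
          show "c0 ^ Suc (Suc r) = 0" unfolding c0_def c_def by (rule nil[OF assms(6)])
        qed
      qed
    qed
    finally have "?phi (kappa p u (fa_mult v w)) = 0" .
    then have "rep (?phi (kappa p u (fa_mult v w))) = (\<lambda>_. 0)" by (simp add: rep_zero)
    then show "h (kappa p u (fa_mult v w)) = (\<lambda>_. 0)" by (simp add: rep_phi[OF h kFA])
  qed
  then show ?thesis using kFA unfolding TG0_def by blast
qed

end
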